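(* Let $0<E<F$ and $h(z)=1-(1-z)^3$. For $x>F/2$ define $$\rho(x)=\frac{\min\{h(z):z\in[E/x,F/x]\}}{\max\{h(z):z\in[E/x,F/x]\}} .$$ Then $\rho$ attains its maximum over $x\in(F/2,\infty)$ at $$x=\frac13(E+F)+\frac13\sqrt{\tfrac12(E^2+F^2)+\tfrac12(F-E)^2}.$$
   Context: Interpretation: in the dual-window iteration $\gamma_{k+1}=3\gamma_k-3S_kg+SS_k\gamma_k$ (with $S$, $S_k$ the frame operators of $(g,a,b)$, $(\gamma_k,a,b)$), the operators $Z_k=(SS_k)^{1/2}$ satisfy $Z_{k+1}=h(Z_k)$; if $Z_0=S$ has spectrum $[E,F]$ and is rescaled to $S/x$, $\rho(x)$ is the ratio of the minimum to the maximum of the spectrum after one step. *)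

theory Defs
  imports Complex_Main
begin

definition h :: "real \<Rightarrow> real" where
  "h z = 1 - (1 - z) ^ 3"

text \<open>rho E F x = min of h over [E/x, F/x] divided by max of h over [E/x, F/x];
  min/max are taken as Inf/Sup of the image of the compact interval (attained, h continuous).\<close>
definition rho :: "real \<Rightarrow> real \<Rightarrow> real \<Rightarrow> real" where
  "rho E F x = Inf (h ` {E/x .. F/x}) / Sup (h ` {E/x .. F/x})"

end

theory Submission
  imports Defs
begin

lemma h_mono: "a \<le> b \<Longrightarrow> h a \<le> h b"
proof -
  assume "a \<le> b"
  then have "1 - b \<le> 1 - a" by simp
  then have "(1 - b)^3 \<le> (1 - a)^3" by (intro power_mono_odd) auto
  then show ?thesis unfolding h_def by simp
qed

lemma rho_eq:
  assumes "0 < x" "0 < E" "E < F"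
  shows "rho E F x = h (E/x) / h (F/x)"
proof -
  have le: "E/x \<le> F/x" using assms by (simp add: divide_right_mono)
  have "Inf (h ` {E/x .. F/x}) = h (E/x)"
    by (rule cInf_eq_minimum) (use le h_mono in auto)
  moreover have "Sup (h ` {E/x .. F/x}) = h (F/x)"
    by (rule cSup_eq_maximum) (use le h_mono in auto)
  ultimately show ?thesis unfolding rho_def by simp
qed

lemma h_div:
  assumes "x \<noteq> 0"
  shows "h (c/x) = c * (3*x^2 - 3*c*x + c^2) / x^3"
  using assms unfolding h_def by (simp add: field_simps power3_eq_cube power2_eq_square)

lemma Qpos: "(F::real) > 0 \<Longrightarrow> 3*x^2 - 3*F*x + F^2 > 0"
proof -
  assume "F > 0"
  have "3*x^2 - 3*F*x + F^2 = 3*(x - F/2)^2 + F^2/4" by (simp add: power2_eq_square algebra_simps)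
  moreover have "F^2/4 > 0" using \<open>F>0\<close> by simp
  moreover have "3*(x - F/2)^2 \<ge> 0" by simp
  ultimately show ?thesis by linarith
qed

lemma cancel_lemma: "(c::real) \<noteq> 0 \<Longrightarrow> (a/c)/(b/c) = a/b"
  by (cases "b=0") (simp_all add: field_simps)

lemma frac_helper: "(a::real) * d \<le> c * b \<Longrightarrow> b > 0 \<Longrightarrow> d > 0 \<Longrightarrow> a / b \<le> c / d"
  by (simp add: divide_simps)

lemma rho_eq2:
  assumes "0 < x" "0 < E" "E < F"
  shows "rho E F x = (E * (3*x^2 - 3*E*x + E^2)) / (F * (3*x^2 - 3*F*x + F^2))"
proof -
  have "rho E F x = (E * (3*x^2 - 3*E*x + E^2) / x^3) / (F * (3*x^2 - 3*F*x + F^2) / x^3)"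
    using rho_eq[OF assms] h_div[of x] assms by simp
  also have "\<dots> = (E * (3*x^2 - 3*E*x + E^2)) / (F * (3*x^2 - 3*F*x + F^2))"
    using assms by (intro cancel_lemma) simp
  finally show ?thesis .
qed

theorem mainTheorem13:
  fixes E F :: real
  assumes "0 < E" and "E < F"
  defines "x0 \<equiv> (E + F) / 3 + sqrt ((E^2 + F^2) / 2 + (F - E)^2 / 2) / 3"
  shows "F / 2 < x0 \<and> (\<forall>x. F / 2 < x \<longrightarrow> rho E F x \<le> rho E F x0)"
proof -
  define s where "s = sqrt ((E^2 + F^2) / 2 + (F - E)^2 / 2)"
  have D: "(E^2 + F^2) / 2 + (F - E)^2 / 2 = E^2 - E*F + F^2"
    by (simp add: power2_eq_square field_simps)
  have Dpos: "E^2 - E*F + F^2 \<ge> 0"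
  proof -
    have "E^2 - E*F + F^2 = (E - F/2)^2 + 3*F^2/4" by (simp add: power2_eq_square algebra_simps)
    moreover have "(E - F/2)^2 \<ge> 0" "F^2 \<ge> 0" by simp_all
    ultimately show ?thesis by linarith
  qed
  have s2: "s^2 = E^2 - E*F + F^2" unfolding s_def D using Dpos by simp
  have s0: "s \<ge> 0" unfolding s_def by simp
  have x0s: "x0 = (E+F+s)/3" unfolding x0_def s_def by simp
  have Dgt: "E^2 - E*F + F^2 > 0"
  proof -
    have "E^2 - E*F + F^2 = (E - F/2)^2 + 3*F^2/4" by (simp add: power2_eq_square field_simps)
    moreover have "(E - F/2)^2 \<ge> 0" "F^2 > 0" using assms by simp_all
    ultimately show ?thesis by linarith
  qed
  have spos: "s > 0"
  proof -
    have "s \<noteq> 0" using s2 Dgt by auto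
    then show ?thesis using s0 by linarith
  qed
  have sgt: "s > F/2 - E"
  proof (cases "F/2 - E \<le> 0")
    case True
    with spos show ?thesis by linarith
  next
    case False
    have "s^2 - (F/2 - E)^2 = 3*F^2/4 - E*F + E*F" unfolding s2
      by (simp add: power2_eq_square field_simps)
    moreover have "F^2 > 0" using assms by simp
    ultimately have "(F/2 - E)^2 < s^2" by linarith
    then show ?thesis using s0 by (rule power_less_imp_less_base)
  qed
  have x0gt: "F/2 < x0" unfolding x0s using sgt by (simp add: field_simps)
  have x0pos: "0 < x0" using x0gt assms by linarith
  define P where "P y = 3*y^2 - 3*E*y + E^2" for y :: real
  define Q where "Q y = 3*y^2 - 3*F*y + F^2" for y :: real
  have Qp: "Q y > 0" for y unfolding Q_def using Qpos assms by simp
  have iden: "P x * Q x0 - P x0 * Q x = -3*(F-E)*s*(x-x0)^2" for x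
    unfolding P_def Q_def using s2 x0s by algebra
  have key: "P x * Q x0 \<le> P x0 * Q x" for x
  proof -
    have a: "-3*(F-E)*s \<le> 0" proof -
      have "0 \<le> 3*(F-E)*s" using assms spos by simp
      then show ?thesis by linarith
    qed
    have b: "(x-x0)^2 \<ge> 0" by (rule zero_le_power2)
    have "-3*(F-E)*s*(x-x0)^2 \<le> 0" using mult_nonpos_nonneg[OF a b] .
    then show ?thesis using iden[of x] by linarith
  qed
  show ?thesis
  proof (intro conjI allI impI)
    show "F/2 < x0" by fact
  next
    fix x assume "F/2 < x"
    then have xpos: "0 < x" using assms by linarith
    have "rho E F x = (E * P x) / (F * Q x)" using rho_eq2[OF xpos assms(1,2)] P_def Q_def by simp
    also have "\<dots> \<le> (E * P x0) / (F * Q x0)"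
    proof -
      have "(E * P x) * (F * Q x0) \<le> (E * P x0) * (F * Q x)"
      proof -
        have "0 \<le> E*F" using assms by simp
        from mult_left_mono[OF key[of x] this] show ?thesis by (simp add: ac_simps)
      qed
      moreover have "F * Q x > 0" "F * Q x0 > 0" using Qp assms by simp_all
      ultimately show ?thesis by (rule frac_helper)
    qed
    also have "\<dots> = rho E F x0" using rho_eq2[OF x0pos assms(1,2)] P_def Q_def by simp
    finally show "rho E F x \<le> rho E F x0" .
  qed
qed

end
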